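(* Let $n$ be a positive even integer. Then $\mathrm{VR}(T_{n,n};\operatorname{diam}(T_{n,n})-1)\simeq S^{\frac{n^2}{2}-1}$.
   Context: For a metric space $X$ and $r\ge 0$, $\mathrm{VR}(X;r)$ is the simplicial complex on vertex set $X$ whose simplices are the finite nonempty subsets of diameter at most $r$. $T_{n,n}$ is the set $\{0,\dots,n-1\}^2$ with metric $d((i,j),(i',j'))=\min\{|i-i'|,n-|i-i'|\}+\min\{|j-j'|,n-|j-j'|\}$; $\operatorname{diam}(T_{n,n})$ is its diameter (equal to $n$ for even $n$). *)

theory Defs
  imports "HOL-Analysis.Analysis"
begin

text \<open>Cyclic distance on Z/n (for a, b < n).\<close>
definition cyc_dist :: "nat \<Rightarrow> nat \<Rightarrow> nat \<Rightarrow> nat" where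
  "cyc_dist n a b = min (if a \<le> b then b - a else a - b) (n - (if a \<le> b then b - a else a - b))"

definition torus_pts :: "nat \<Rightarrow> (nat \<times> nat) set" where
  "torus_pts n = {0..<n} \<times> {0..<n}"

definition torus_dist :: "nat \<Rightarrow> nat \<times> nat \<Rightarrow> nat \<times> nat \<Rightarrow> real" where
  "torus_dist n p q = real (cyc_dist n (fst p) (fst q) + cyc_dist n (snd p) (snd q))"

definition torus_diam :: "nat \<Rightarrow> real" where
  "torus_diam n = Sup {torus_dist n p q | p q. p \<in> torus_pts n \<and> q \<in> torus_pts n}"

definition VR :: "'a set \<Rightarrow> ('a \<Rightarrow> 'a \<Rightarrow> real) \<Rightarrow> real \<Rightarrow> 'a set set" where
  "VR X d r = {\<sigma>. \<sigma> \<subseteq> X \<and> finite \<sigma> \<and> \<sigma> \<noteq> {} \<and> (\<forall>x\<in>\<sigma>. \<forall>y\<in>\<sigma>. d x y \<le> r)}"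

text \<open>Geometric realization of a simplicial complex K (a set of finite nonempty
  vertex sets, closed under nonempty subsets): points are barycentric coordinate
  functions whose support is a simplex of K, topologized as a subspace of the
  product space of real-valued functions on the vertices.\<close>
definition realization :: "'a set set \<Rightarrow> ('a \<Rightarrow> real) topology" where
  "realization K = subtopology (powertop_real UNIV)
     {x. (\<forall>v. 0 \<le> x v) \<and> {v. x v \<noteq> 0} \<in> K \<and> sum x {v. x v \<noteq> 0} = 1}"

end

theory Submission
  imports Defs
begin


lemma sum_support:
  fixes p q :: "nat \<Rightarrow> 'a" and N :: nat
  assumes ip: "inj_on p {..<N}" and iq: "inj_on q {..<N}"
    and dj: "p`{..<N} \<inter> q`{..<N} = {}"
    and z: "\<And>v. v \<notin> p`{..<N} \<union> q`{..<N} \<Longrightarrow> y v = (0::real)"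
  shows "sum y {v. y v \<noteq> 0} = (\<Sum>k<N. y (p k) + y (q k))"
proof -
  have "sum y {v. y v \<noteq> 0} = sum y (p`{..<N} \<union> q`{..<N})"
    by (rule sum.mono_neutral_left) (use z in \<open>auto intro: finite_imageI\<close>)
  also have "\<dots> = sum y (p`{..<N}) + sum y (q`{..<N})"
    by (rule sum.union_disjoint) (use dj in auto)
  also have "\<dots> = (\<Sum>k<N. y(p k)) + (\<Sum>k<N. y (q k))"
    using ip iq by (simp add: sum.reindex)
  also have "\<dots> = (\<Sum>k<N. y (p k) + y (q k))" by (simp add: sum.distrib)
  finally show ?thesis .
qed

lemma cross_sphere:
  fixes p q :: "nat \<Rightarrow> 'a" and N :: nat
  assumes ip: "inj_on p {..<N}" and iq: "inj_on q {..<N}"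
    and dj: "p`{..<N} \<inter> q`{..<N} = {}" and N1: "1 \<le> N"
  defines "K \<equiv> {\<sigma>. \<sigma> \<subseteq> p`{..<N} \<union> q`{..<N} \<and> finite \<sigma> \<and> \<sigma> \<noteq> {} \<and> (\<forall>k<N. \<not>(p k \<in> \<sigma> \<and> q k \<in> \<sigma>))}"
  shows "realization K homeomorphic_space nsphere (N-1)"
proof -
  define A where "A = p`{..<N} \<union> q`{..<N}"
  define S where "S = {x::'a\<Rightarrow>real. (\<forall>v. 0 \<le> x v) \<and> {v. x v \<noteq> 0} \<in> K \<and> sum x {v. x v \<noteq> 0} = 1}"
  define T where "T = {z::nat\<Rightarrow>real. (\<Sum>i\<le>N-1. z i ^ 2) = 1 \<and> (\<forall>i>N-1. z i = 0)}"
  define d where "d x k = x (p k) - x (q k)" for x :: "'a\<Rightarrow>real" and k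
  define L2 where "L2 x = sqrt (\<Sum>k<N. (d x k)^2)" for x
  define f where "f x = (\<lambda>k. if k < N then d x k / L2 x else 0)" for x
  define L1 where "L1 z = (\<Sum>k<N. \<bar>z k\<bar>)" for z :: "nat \<Rightarrow> real"
  define g where "g z = (\<lambda>v. if v \<in> p`{..<N} then max (z (inv_into {..<N} p v)) 0 / L1 z
     else if v \<in> q`{..<N} then max (- z (inv_into {..<N} q v)) 0 / L1 z else 0)" for z
  have R: "realization K = subtopology (powertop_real UNIV) S"
    unfolding realization_def S_def ..
  have Sph: "nsphere (N-1) = subtopology (powertop_real UNIV) T"
    unfolding nsphere T_def ..
  have tS: "topspace (subtopology (powertop_real UNIV) S) = S" by simp
  have tT: "topspace (subtopology (powertop_real UNIV) T) = T" by simp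
  have atN: "{..N-1} = {..<N}" using N1 by auto
  have gp: "g z (p k) = max (z k) 0 / L1 z" if "k < N" for z k
    using that ip by (simp add: g_def)
  have gq: "g z (q k) = max (- z k) 0 / L1 z" if "k < N" for z k
  proof -
    have "q k \<notin> p`{..<N}" using dj that by auto
    then show ?thesis using that iq by (simp add: g_def)
  qed
  have gA: "g z v = 0" if "v \<notin> A" for z v using that by (simp add: g_def A_def)
  have S1: "x v = 0" if "x \<in> S" "v \<notin> A" for x v
    using that unfolding S_def K_def A_def by auto
  have S0: "0 \<le> x v" if "x \<in> S" for x v using that unfolding S_def by auto
  have S2: "x (p k) = 0 \<or> x (q k) = 0" if "x \<in> S" "k < N" for x k
    using that unfolding S_def K_def by auto
  have S3: "(\<Sum>k<N. x (p k) + x (q k)) = 1" if "x \<in> S" for x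
  proof -
    have "sum x {v. x v \<noteq> 0} = 1" using that unfolding S_def by auto
    moreover have "sum x {v. x v \<noteq> 0} = (\<Sum>k<N. x (p k) + x (q k))"
      by (rule sum_support[OF ip iq dj]) (use S1 that A_def in auto)
    ultimately show ?thesis by simp
  qed
  have absd: "\<bar>d x k\<bar> = x (p k) + x (q k)" if "x \<in> S" "k < N" for x k
    using S2[OF that] S0[OF that(1)] unfolding d_def by (metis abs_of_nonneg abs_minus_commute add_0 add_0_right diff_0 diff_0_right S0[OF that(1)])
  have L1d: "(\<Sum>k<N. \<bar>d x k\<bar>) = 1" if "x \<in> S" for x
    using S3[OF that] absd[OF that] by simp
  have L2pos: "L2 x > 0" if xS: "x \<in> S" for x
  proof -
    obtain k where k: "k < N" "d x k \<noteq> 0"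
      using L1d[OF xS] by (metis (no_types, lifting) abs_zero lessThan_iff sum.neutral zero_neq_one)
    have "0 < (\<Sum>k<N. (d x k)^2)"
      by (rule sum_pos2[of _ k]) (use k in auto)
    then show ?thesis unfolding L2_def by simp
  qed
  have L2pos': "(\<Sum>k<N. (x (p k) - x (q k)) * (x (p k) - x (q k))) > 0" if "x \<in> S" for x
    using L2pos[OF that] by (simp add: L2_def d_def power2_eq_square)
  have maxp: "max (d x k) 0 = x (p k)" if "x \<in> S" "k < N" for x k
    using S2[OF that] S0[OF that(1)] unfolding d_def by (smt (verit) S0 that(1))
  have maxq: "max (- d x k) 0 = x (q k)" if "x \<in> S" "k < N" for x k
    using S2[OF that] S0[OF that(1)] unfolding d_def by (smt (verit) S0 that(1))
  have T1: "(\<Sum>k<N. (z k)^2) = 1" if "z \<in> T" for z using that atN unfolding T_def by auto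
  have T2: "z k = 0" if "z \<in> T" "N \<le> k" for z k using that N1 unfolding T_def by auto
  have L1pos: "L1 z > 0" if zT: "z \<in> T" for z
  proof -
    obtain k where k: "k < N" "z k \<noteq> 0"
      using T1[OF zT] by (metis (no_types, lifting) lessThan_iff power_zero_numeral sum.neutral zero_neq_one)
    show ?thesis unfolding L1_def
      by (rule sum_pos2[of _ k]) (use k in auto)
  qed
  have fT: "f x \<in> T" if xS: "x \<in> S" for x
  proof -
    have "(\<Sum>i\<le>N-1. f x i ^2) = (\<Sum>k<N. (d x k)^2) / (L2 x)^2"
      unfolding atN by (simp add: f_def power_divide sum_divide_distrib)
    also have "(L2 x)^2 = (\<Sum>k<N. (d x k)^2)" by (simp add: L2_def sum_nonneg)
    finally have "(\<Sum>i\<le>N-1. f x i ^2) = 1" using L2pos[OF xS] by (simp add: L2_def)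
    then show ?thesis unfolding T_def f_def by auto
  qed
  have dg: "d (g z) k = z k / L1 z" if "z \<in> T" "k < N" for z k
    unfolding d_def gp[OF that(2)] gq[OF that(2)] by (simp add: max_def diff_divide_distrib[symmetric])
  have gS: "g z \<in> S" if zT: "z \<in> T" for z
  proof -
    have nn: "0 \<le> g z v" for v using L1pos[OF zT] by (simp add: g_def)
    have sm: "sum (g z) {v. g z v \<noteq> 0} = (\<Sum>k<N. g z (p k) + g z (q k))"
      by (rule sum_support[OF ip iq dj]) (use gA A_def in auto)
    also have "\<dots> = (\<Sum>k<N. \<bar>z k\<bar> / L1 z)"
      by (rule sum.cong) (auto simp: gp gq max_def add_divide_distrib[symmetric])
    also have "\<dots> = 1" using L1pos[OF zT] by (simp add: sum_divide_distrib[symmetric] L1_def)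
    finally have s1: "sum (g z) {v. g z v \<noteq> 0} = 1" .
    have sub: "{v. g z v \<noteq> 0} \<subseteq> A" using gA by auto
    have fin: "finite A" unfolding A_def by auto
    have ne: "{v. g z v \<noteq> 0} \<noteq> {}" using s1 by (metis sum.empty zero_neq_one)
    have np: "\<not>(p k \<in> {v. g z v \<noteq> 0} \<and> q k \<in> {v. g z v \<noteq> 0})" if "k < N" for k
      using that by (auto simp: gp gq max_def split: if_splits)
    show ?thesis unfolding S_def K_def using nn s1 sub fin ne np A_def
      by (auto intro: finite_subset)
  qed
  have gf: "g (f x) = x" if xS: "x \<in> S" for x
  proof
    fix v
    have L1f: "L1 (f x) = 1 / L2 x"
      using L1d[OF xS] L2pos[OF xS] by (simp add: L1_def f_def abs_divide sum_divide_distrib[symmetric])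
    have key: "max (a / c) 0 / (1 / c) = max a 0" if "c > 0" for a c :: real
      using that by (auto simp: max_def divide_simps)
    show "g (f x) v = x v"
    proof (cases "v \<in> A")
      case True
      then consider k where "k < N" "v = p k" | k where "k < N" "v = q k" unfolding A_def by auto
      then show ?thesis
      proof cases
        case 1 then show ?thesis using gp[OF 1(1)] L1f key[OF L2pos[OF xS]] maxp[OF xS 1(1)]
          by (simp add: f_def)
      next
        case 2 then show ?thesis using gq[OF 2(1)] L1f key[OF L2pos[OF xS], of "- d x k"] maxq[OF xS 2(1)]
          by (simp add: f_def)
      qed
    next
      case False then show ?thesis using gA S1[OF xS] by simp
    qed
  qed
  have fg: "f (g z) = z" if zT: "z \<in> T" for z
  proof
    fix k
    have "(\<Sum>k<N. (d (g z) k)^2) = (\<Sum>k<N. (z k)^2) / (L1 z)^2"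
      using dg[OF zT] by (simp add: power_divide sum_divide_distrib)
    then have "(L2 (g z)) = 1 / L1 z" using T1[OF zT] L1pos[OF zT]
      by (simp add: L2_def real_sqrt_divide)
    then show "f (g z) k = z k"
      using dg[OF zT] T2[OF zT] L1pos[OF zT] by (simp add: f_def)
  qed
  have contf: "continuous_map (subtopology (powertop_real UNIV) S) (subtopology (powertop_real UNIV) T) f"
  proof (rule continuous_map_into_subtopology)
    show "f \<in> topspace (subtopology (powertop_real UNIV) S) \<rightarrow> T" using fT by auto
    show "continuous_map (subtopology (powertop_real UNIV) S) (powertop_real UNIV) f"
      unfolding continuous_map_componentwise_UNIV
    proof
      fix k
      show "continuous_map (subtopology (powertop_real UNIV) S) euclideanreal (\<lambda>x. f x k)"
      proof (cases "k < N")
        case True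
        then show ?thesis unfolding f_def L2_def d_def
          by (simp only: power2_eq_square if_True, intro continuous_intros) (use L2pos' in \<open>auto dest!: L2pos'\<close>)
      qed (simp add: f_def)
    qed
  qed
  have contg: "continuous_map (subtopology (powertop_real UNIV) T) (subtopology (powertop_real UNIV) S) g"
  proof (rule continuous_map_into_subtopology)
    show "g \<in> topspace (subtopology (powertop_real UNIV) T) \<rightarrow> S" using gS by auto
    show "continuous_map (subtopology (powertop_real UNIV) T) (powertop_real UNIV) g"
      unfolding continuous_map_componentwise_UNIV
    proof
      fix v
      show "continuous_map (subtopology (powertop_real UNIV) T) euclideanreal (\<lambda>z. g z v)"
        unfolding g_def L1_def
        by (intro continuous_intros) (use L1pos in \<open>auto simp: L1_def dest!: L1pos[unfolded L1_def]\<close>)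
    qed
  qed
  have "homeomorphic_maps (realization K) (nsphere (N-1)) f g"
    unfolding homeomorphic_maps_def R Sph tS tT using contf contg gf fg by auto
  then show ?thesis unfolding homeomorphic_space_def by blast
qed


lemma cyc_le: "a < n \<Longrightarrow> b < n \<Longrightarrow> n = 2*m \<Longrightarrow> cyc_dist n a b \<le> m"
  unfolding cyc_dist_def by auto

lemma cyc_eq: "a < n \<Longrightarrow> b < n \<Longrightarrow> n = 2*m \<Longrightarrow> cyc_dist n a b = m \<longleftrightarrow> (b = a + m \<or> a = b + m)"
  unfolding cyc_dist_def by auto

definition ant :: "nat \<Rightarrow> nat \<times> nat \<Rightarrow> nat \<times> nat" where
  "ant m u = (if fst u < m then fst u + m else fst u - m, if snd u < m then snd u + m else snd u - m)"

lemma td_le: assumes "u \<in> torus_pts n" "v \<in> torus_pts n" "n = 2*m"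
  shows "torus_dist n u v \<le> real n"
proof -
  have "cyc_dist n (fst u) (fst v) \<le> m" "cyc_dist n (snd u) (snd v) \<le> m"
    using assms by (auto simp: torus_pts_def intro!: cyc_le)
  then show ?thesis using assms(3) unfolding torus_dist_def by simp
qed

lemma td_eq: assumes "u \<in> torus_pts n" "v \<in> torus_pts n" "n = 2*m"
  shows "torus_dist n u v = real n \<longleftrightarrow> v = ant m u"
proof -
  have a: "cyc_dist n (fst u) (fst v) \<le> m" "cyc_dist n (snd u) (snd v) \<le> m"
    using assms by (auto simp: torus_pts_def intro!: cyc_le)
  have "torus_dist n u v = real n \<longleftrightarrow> cyc_dist n (fst u) (fst v) = m \<and> cyc_dist n (snd u) (snd v) = m"
    using a assms(3) unfolding torus_dist_def by linarith
  also have "\<dots> \<longleftrightarrow> v = ant m u"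
    using assms cyc_eq[of "fst u" n "fst v" m] cyc_eq[of "snd u" n "snd v" m]
    by (cases u; cases v) (auto simp: torus_pts_def ant_def)
  finally show ?thesis .
qed

lemma diam_eq: assumes "n = 2*m" and False: "m \<noteq> 0"
  shows "torus_diam n = real n"
  unfolding torus_diam_def
proof (rule cSup_eq_maximum)
  show "real n \<in> {torus_dist n p q |p q. p \<in> torus_pts n \<and> q \<in> torus_pts n}"
  proof -
    have "(0,0) \<in> torus_pts n" "ant m (0,0) \<in> torus_pts n" using assms False by (auto simp: torus_pts_def ant_def)
    moreover have "torus_dist n (0,0) (ant m (0,0)) = real n" using td_eq[OF _ _ assms(1)] calculation by blast
    ultimately show ?thesis by (metis (mono_tags, lifting) mem_Collect_eq)
  qed
  show "\<And>x. x \<in> {torus_dist n p q |p q. p \<in> torus_pts n \<and> q \<in> torus_pts n} \<Longrightarrow> x \<le> real n"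
    using td_le[OF _ _ assms(1)] by blast
qed



lemma main_torus:
  assumes n: "n = 2*m" and m: "0 < m"
  shows "realization (VR (torus_pts n) (torus_dist n) (torus_diam n - 1))
           homotopy_equivalent_space nsphere (n^2 div 2 - 1)"
proof -
  define N where "N = m*n"
  define p where "p k = (k div n, k mod n)" for k
  define q where "q k = ant m (p k)" for k
  define B1 where "B1 = {0..<m} \<times> {0..<n}"
  define B2 where "B2 = {m..<n} \<times> {0..<n}"
  have X: "torus_pts n = B1 \<union> B2" unfolding torus_pts_def B1_def B2_def using n by auto
  have P: "p`{..<N} = B1"
  proof
    show "p`{..<N} \<subseteq> B1" unfolding B1_def p_def N_def using m n
      by (auto simp: less_mult_imp_div_less)
    show "B1 \<subseteq> p`{..<N}"
    proof
      fix u assume "u \<in> B1"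
      then obtain i j where u: "u = (i,j)" "i < m" "j < n" unfolding B1_def by auto
      have "i*n + j < m*n"
      proof -
        have "i*n + j < i*n + n" using u by simp
        also have "\<dots> = (i+1)*n" by simp
        also have "\<dots> \<le> m*n" using u by (intro mult_right_mono) auto
        finally show ?thesis .
      qed
      moreover have "p (i*n+j) = u" using u by (simp add: p_def)
      ultimately show "u \<in> p`{..<N}" unfolding N_def by force
    qed
  qed
  have ant12: "ant m u \<in> B2" if "u \<in> B1" for u using that n unfolding B1_def B2_def ant_def by auto
  have ant21: "ant m u \<in> B1" if "u \<in> B2" for u using that n unfolding B1_def B2_def ant_def by auto
  have antinv: "ant m (ant m u) = u" if "u \<in> torus_pts n" for u
    using that n unfolding torus_pts_def ant_def by (cases u) auto
  have Q: "q`{..<N} = B2"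
  proof
    show "q`{..<N} \<subseteq> B2" unfolding q_def using P ant12 by blast
    show "B2 \<subseteq> q`{..<N}"
    proof
      fix u assume u: "u \<in> B2"
      then have "ant m u \<in> p`{..<N}" using P ant21 by auto
      then obtain k where "k < N" "p k = ant m u" by auto
      moreover have "ant m (ant m u) = u" using antinv X u by auto
      ultimately show "u \<in> q`{..<N}" unfolding q_def by force
    qed
  qed
  have ip: "inj_on p {..<N}"
  proof (rule inj_onI)
    fix x y assume "p x = p y"
    then have "x div n = y div n" "x mod n = y mod n" unfolding p_def by auto
    then show "x = y" by (metis div_mult_mod_eq)
  qed
  have iq: "inj_on q {..<N}"
  proof (rule inj_onI)
    fix x y assume xy: "x \<in> {..<N}" "y \<in> {..<N}" "q x = q y"
    have "p x \<in> torus_pts n" "p y \<in> torus_pts n" using xy(1,2) P X by auto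
    then have "p x = p y" using xy(3) antinv unfolding q_def by metis
    then show "x = y" using ip xy(1,2) inj_onD by metis
  qed
  have dj: "p`{..<N} \<inter> q`{..<N} = {}" unfolding P Q B1_def B2_def by auto
  have N1: "1 \<le> N" unfolding N_def using n m by simp
  have NN: "N - 1 = n^2 div 2 - 1" unfolding N_def using n by (simp add: power2_eq_square)
  define K where "K \<equiv> {\<sigma>. \<sigma> \<subseteq> p`{..<N} \<union> q`{..<N} \<and> finite \<sigma> \<and> \<sigma> \<noteq> {} \<and> (\<forall>k<N. \<not>(p k \<in> \<sigma> \<and> q k \<in> \<sigma>))}"
  have tdle: "torus_dist n x y \<le> real n - 1 \<longleftrightarrow> y \<noteq> ant m x" if "x \<in> torus_pts n" "y \<in> torus_pts n" for x y
  proof -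
    obtain k where k: "torus_dist n x y = real k" unfolding torus_dist_def by blast
    then show ?thesis using td_le[OF that n] td_eq[OF that n] by auto
  qed
  have pair: "(\<forall>x\<in>\<sigma>. \<forall>y\<in>\<sigma>. y \<noteq> ant m x) \<longleftrightarrow> (\<forall>k<N. \<not>(p k \<in> \<sigma> \<and> q k \<in> \<sigma>))"
    if "\<sigma> \<subseteq> torus_pts n" for \<sigma>
  proof
    assume "\<forall>x\<in>\<sigma>. \<forall>y\<in>\<sigma>. y \<noteq> ant m x" then show "\<forall>k<N. \<not>(p k \<in> \<sigma> \<and> q k \<in> \<sigma>)"
      unfolding q_def by auto
  next
    assume H: "\<forall>k<N. \<not>(p k \<in> \<sigma> \<and> q k \<in> \<sigma>)"
    show "\<forall>x\<in>\<sigma>. \<forall>y\<in>\<sigma>. y \<noteq> ant m x"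
    proof (intro ballI notI)
      fix x y assume xy: "x \<in> \<sigma>" "y \<in> \<sigma>" "y = ant m x"
      have xX: "x \<in> B1 \<union> B2" using xy that X by auto
      then show False
      proof
        assume "x \<in> B1"
        then obtain k where k: "k < N" "x = p k" using P by auto
        then have "q k = y" using xy(3) unfolding q_def by simp
        then show False using H k xy(1,2) by blast
      next
        assume "x \<in> B2"
        then have "y \<in> B1" using ant21 xy by auto
        then obtain k where k: "k < N" "y = p k" using P by auto
        have xT: "x \<in> torus_pts n" using xX X by simp
        have "x = ant m y" using antinv[OF xT] xy(3) by simp
        then have "q k = x" using k(2) unfolding q_def by simp
        then show False using H k(1) k(2) xy(1,2) by blast
      qed
    qed
  qed
  have VReq: "VR (torus_pts n) (torus_dist n) (torus_diam n - 1) = K"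
  proof -
    have "torus_diam n = real n" using diam_eq[OF n] m by simp
    moreover have "p`{..<N} \<union> q`{..<N} = torus_pts n" using P Q X by simp
    moreover have "(\<sigma> \<subseteq> torus_pts n \<and> finite \<sigma> \<and> \<sigma> \<noteq> {} \<and> (\<forall>x\<in>\<sigma>. \<forall>y\<in>\<sigma>. torus_dist n x y \<le> real n - 1))
        \<longleftrightarrow> (\<sigma> \<subseteq> torus_pts n \<and> finite \<sigma> \<and> \<sigma> \<noteq> {} \<and> (\<forall>k<N. \<not>(p k \<in> \<sigma> \<and> q k \<in> \<sigma>)))" for \<sigma>
    proof (cases "\<sigma> \<subseteq> torus_pts n")
      case True
      have "(\<forall>x\<in>\<sigma>. \<forall>y\<in>\<sigma>. torus_dist n x y \<le> real n - 1) \<longleftrightarrow> (\<forall>x\<in>\<sigma>. \<forall>y\<in>\<sigma>. y \<noteq> ant m x)"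
        using tdle True by blast
      then show ?thesis using pair[OF True] True by simp
    qed simp
    ultimately show ?thesis unfolding VR_def K_def by simp
  qed
  have "realization K homeomorphic_space nsphere (N-1)"
    unfolding K_def by (rule cross_sphere[OF ip iq dj N1])
  then show ?thesis unfolding VReq NN by (rule homeomorphic_imp_homotopy_equivalent_space)
qed


theorem corollary6p3:
  fixes n :: nat
  assumes "0 < n" and "even n"
  shows "realization (VR (torus_pts n) (torus_dist n) (torus_diam n - 1))
           homotopy_equivalent_space nsphere (n^2 div 2 - 1)"
proof -
  obtain m where m: "n = 2*m" using assms(2) by (auto elim: evenE)
  then have "0 < m" using assms(1) by simp
  then show ?thesis using main_torus[OF m] by simp
qed

end
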